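(* Let $\mathcal{M}^r_{g,d}$ be an expected maximal Brill--Noether locus. Then $$(2r+1)\left\lfloor\frac{-\rho(g,r,d)+1}{2}\right\rfloor-\left\lfloor\frac{-\rho(g,r,d)}{2}\right\rfloor\le g$$ holds unless $\rho(g,r,d)=-(r+1)=-\lceil\sqrt g\rceil$ is odd and $g$ is not a perfect square.
   Context: $\rho(g,r,d)=g-(r+1)(g-d+r)$; $\mathcal{M}^r_{g,d}\subseteq\mathcal{M}_g$ is the locus of smooth genus $g$ curves admitting a $g^r_d$. A Brill--Noether locus is expected maximal if $d$ is maximal such that $\rho(g,r,d)<0$ and $\rho(g,r-1,d-1)\ge0$ (up to Serre duality); concretely the expected maximal loci are the $\mathcal{M}^r_{g,d}$ with $2r\le d\le g-1$, where $1\le r\le\lceil\sqrt g-1\rceil$ if $g\ge\lfloor\sqrt g\rfloor^2+\lfloor\sqrt g\rfloor$, $1\le r\le\lfloor\sqrt g-1\rfloor$ if $g<\lfloor\sqrt g\rfloor^2+\lfloor\sqrt g\rfloor$, and $d=r+\lceil gr/(r+1)\rceil-1$. *)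

theory Defs
  imports Complex_Main
begin

definition bn_rho :: "nat \<Rightarrow> nat \<Rightarrow> nat \<Rightarrow> int" where
  "bn_rho g r d = int g - (int r + 1) * (int g - int d + int r)"

text \<open>The parameters (g,r,d) of an expected maximal Brill--Noether locus M^r_{g,d},
  following the explicit description in the paper.\<close>
definition expected_maximal :: "nat \<Rightarrow> nat \<Rightarrow> nat \<Rightarrow> bool" where
  "expected_maximal g r d \<longleftrightarrow>
     2 * r \<le> d \<and> d + 1 \<le> g \<and> 1 \<le> r \<and>
     (if real g \<ge> (of_int \<lfloor>sqrt (real g)\<rfloor>)^2 + of_int \<lfloor>sqrt (real g)\<rfloor>
      then int r \<le> \<lceil>sqrt (real g) - 1\<rceil>
      else int r \<le> \<lfloor>sqrt (real g) - 1\<rfloor>) \<and>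
     int d = int r + \<lceil>real g * real r / (real r + 1)\<rceil> - 1"

end

theory Submission
  imports Defs
begin

lemma arith_final:
  fixes n r g c m :: int
  assumes "1 \<le> n" "n \<le> r + 1" "1 \<le> r" "n = r * g - (r+1)*(c-1)"
    and "(r+1)^2 \<le> g \<or> (r*(r+1) \<le> g \<and> \<not> (n = r+1 \<and> odd n))"
  shows "(2*r+1) * ((n+1) div 2) - n div 2 \<le> g"
proof (cases "even n")
  case True
  then obtain m where m: "n = 2*m" by blast
  have e: "(2*r+1) * ((n+1) div 2) - n div 2 = r * (2*m)" using m by (simp add: algebra_simps)
  have "r*(2*m) \<le> r*(r+1)" using assms m by (intro mult_left_mono) auto
  moreover have "r*(r+1) \<le> (r+1)^2" unfolding power2_eq_square
    using assms(3) by (intro mult_right_mono) auto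
  hence "r*(r+1) \<le> g" using assms(5) by linarith
  ultimately show ?thesis using e by linarith
next
  case False
  then obtain m where m: "n = 2*m+1" by (metis oddE)
  have e: "(2*r+1) * ((n+1) div 2) - n div 2 = r * (2*m+2) + 1" using m
    by (simp add: algebra_simps)
  show ?thesis
  proof (cases "(r+1)^2 \<le> g")
    case True
    have "r*(2*m+2) \<le> r*(r+2)" using assms m by (intro mult_left_mono) auto
    moreover have "r*(r+2) + 1 = (r+1)^2" by (simp add: power2_eq_square algebra_simps)
    ultimately show ?thesis using e True by linarith
  next
    case F: False
    hence B: "r*(r+1) \<le> g" "n \<le> r" using assms False by auto
    show ?thesis
    proof (cases "n = r")
      case True
      have "g \<noteq> r*(r+1)"
      proof
        assume "g = r*(r+1)"
        hence "n = (r+1)*(r*r - c + 1)" using assms(4) by (simp add: ring_distribs)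
        hence "(r+1) dvd n" by simp
        hence "r + 1 \<le> n" using assms(1) by (simp add: zdvd_imp_le)
        thus False using True by simp
      qed
      hence "g \<ge> r*(r+1) + 1" using B by simp
      moreover have "r*(2*m+2) = r*(r+1)" using True m by simp
      ultimately show ?thesis using e by linarith
    next
      case False
      hence "2*m+2 \<le> r" using B m by simp
      hence "r*(2*m+2) \<le> r*r" using assms by (intro mult_left_mono) auto
      moreover have "r*r + 1 \<le> r*(r+1)" using assms(3) by (simp add: ring_distribs)
      ultimately show ?thesis using e B by linarith
    qed
  qed
qed


theorem lemma3p2:
  fixes g r d :: nat
  assumes "expected_maximal g r d"
    and "\<not> (bn_rho g r d = - (int r + 1) \<and> int r + 1 = \<lceil>sqrt (real g)\<rceil> \<and>
            odd (bn_rho g r d) \<and> \<not> (\<exists>k::nat. g = k^2))"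
  shows "(2 * int r + 1) * \<lfloor>(real_of_int (- bn_rho g r d) + 1) / 2\<rfloor>
           - \<lfloor>real_of_int (- bn_rho g r d) / 2\<rfloor> \<le> int g"
proof -
  note EM = assms(1)[unfolded expected_maximal_def]
  have r1: "1 \<le> r" and dg: "d + 1 \<le> g" using EM by auto
  define c where "c = \<lceil>real g * real r / (real r + 1)\<rceil>"
  have dc: "int d = int r + c - 1" using EM c_def by auto
  have c1: "real_of_int c - 1 < real g * real r / (real r + 1)"
    unfolding c_def by linarith
  have c2: "real g * real r / (real r + 1) \<le> real_of_int c"
    unfolding c_def by linarith
  have c1': "(real_of_int c - 1) * (real r + 1) < real g * real r"
    using c1 by (simp add: field_simps)
  have c2': "real g * real r \<le> real_of_int c * (real r + 1)"
    using c2 by (simp add: field_simps)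
  have c1i: "(c - 1) * (int r + 1) < int g * int r"
  proof -
    have "real_of_int ((c - 1) * (int r + 1)) < real_of_int (int g * int r)"
      using c1' by simp
    thus ?thesis by linarith
  qed
  have c2i: "int g * int r \<le> c * (int r + 1)"
  proof -
    have "real_of_int (int g * int r) \<le> real_of_int (c * (int r + 1))"
      using c2' by simp
    thus ?thesis by linarith
  qed
  define n where "n = - bn_rho g r d"
  have nform: "n = int r * int g - (int r + 1) * (c - 1)"
    unfolding n_def bn_rho_def dc by (simp add: algebra_simps)
  have n1: "1 \<le> n" using nform c1i by (simp add: algebra_simps)
  have n2: "n \<le> int r + 1" using nform c2i by (simp add: algebra_simps)
  define k where "k = nat \<lfloor>sqrt (real g)\<rfloor>"
  have kr: "real k = of_int \<lfloor>sqrt (real g)\<rfloor>" unfolding k_def by simp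
  have k1: "real k \<le> sqrt (real g)" using kr by simp
  have k2: "sqrt (real g) < real k + 1" using kr by linarith
  have kg: "k^2 \<le> g"
  proof -
    have "real k ^2 \<le> sqrt (real g) ^2" using k1 by (intro power_mono) auto
    thus ?thesis by (metis of_nat_le_iff of_nat_power of_nat_0_le_iff real_sqrt_pow2)
  qed
  have gk: "g < (k+1)^2"
  proof -
    have "sqrt (real g) ^2 < (real k + 1)^2" using k2 by (intro power_strict_mono) auto
    thus ?thesis by (metis of_nat_1 of_nat_add of_nat_less_iff of_nat_0_le_iff of_nat_power real_sqrt_pow2)
  qed
  have key: "(int r + 1)^2 \<le> int g \<or> (int r * (int r + 1) \<le> int g \<and> \<not> (n = int r + 1 \<and> odd n))"
  proof (cases "real g \<ge> (of_int \<lfloor>sqrt (real g)\<rfloor>)^2 + of_int \<lfloor>sqrt (real g)\<rfloor>")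
    case True
    hence gkk: "k^2 + k \<le> g" using kr
      by (metis of_nat_add of_nat_le_iff of_nat_power)
    have rc: "int r \<le> \<lceil>sqrt (real g) - 1\<rceil>" using EM True by simp
    have gnsq: "g \<noteq> k^2"
    proof
      assume "g = k^2"
      hence "k = 0" using gkk by simp
      thus False using \<open>g = k^2\<close> dg by simp
    qed
    have nsq: "\<not> (\<exists>j::nat. g = j^2)"
    proof
      assume "\<exists>j::nat. g = j^2"
      then obtain j where j: "g = j^2" by blast
      have "k \<le> j" using kg j by (metis power2_le_imp_le zero_le)
      moreover have "j < k + 1" using gk j by (metis power_less_imp_less_base zero_le)
      ultimately have "j = k" by simp
      thus False using j gnsq by simp
    qed
    have kl: "real k < sqrt (real g)"
    proof -
      have "real (k^2) < real g" using kg gnsq by simp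
      hence "sqrt (real (k^2)) < sqrt (real g)" by (simp only: real_sqrt_less_iff)
      thus ?thesis by simp
    qed
    have ce: "\<lceil>sqrt (real g)\<rceil> = int k + 1"
      by (rule ceiling_unique) (use kl k2 in auto)
    have "\<lceil>sqrt (real g) - 1\<rceil> = int k" using ce by (simp add: ceiling_diff_one)
    hence rk: "r \<le> k" using rc by simp
    show ?thesis
    proof (cases "r = k")
      case True
      have "int r * (int r + 1) \<le> int g" using gkk True
        by (metis of_nat_add of_nat_le_iff of_nat_mult of_nat_1 power2_eq_square distrib_left mult_1_right)
      moreover have "\<not> (n = int r + 1 \<and> odd n)"
      proof
        assume h: "n = int r + 1 \<and> odd n"
        hence "bn_rho g r d = - (int r + 1)" "odd (bn_rho g r d)" using n_def by auto
        thus False using assms(2) nsq ce True by auto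
      qed
      ultimately show ?thesis by simp
    next
      case False
      hence "r + 1 \<le> k" using rk by simp
      hence "(r+1)^2 \<le> k^2" by (simp add: power_mono)
      hence "(r+1)^2 \<le> g" using kg by (rule order_trans)
      hence "(int r + 1)^2 \<le> int g" by (metis of_nat_1 of_nat_add of_nat_le_iff of_nat_power)
      thus ?thesis by simp
    qed
  next
    case False
    have rc: "int r \<le> \<lfloor>sqrt (real g) - 1\<rfloor>" using EM False by simp
    hence "r + 1 \<le> k" unfolding k_def by linarith
    hence "(r+1)^2 \<le> k^2" by (simp add: power_mono)
    hence "(r+1)^2 \<le> g" using kg by (rule order_trans)
    hence "(int r + 1)^2 \<le> int g" by (metis of_nat_1 of_nat_add of_nat_le_iff of_nat_power)
    thus ?thesis by simp
  qed
  have fin: "(2*int r+1) * ((n+1) div 2) - n div 2 \<le> int g"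
    by (rule arith_final[OF n1 n2 _ nform key]) (use r1 in simp)
  have f1: "\<lfloor>(real_of_int n + 1) / 2\<rfloor> = (n+1) div 2"
    using floor_divide_of_int_eq[of "n+1" 2] by simp
  have f2: "\<lfloor>real_of_int n / 2\<rfloor> = n div 2"
    using floor_divide_of_int_eq[of n 2] by simp
  show ?thesis using fin f1 f2 unfolding n_def by simp
qed

end
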